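(* Let $a>1$ and $\mu_1\in(0,1]$ be constants. Let $n$ be sufficiently large and $d\ge n$. Let $X,Y\in\{0,1\}^d$ be independent and uniform, and let $X'=\mathrm{BSC}_{\frac{1-\rho}{2}}(X)$ with $\rho=\sqrt{\frac{2\ln(a\mu_1 n)-\ln\ln n}{d}}$. There exists a constant $\alpha_1>0$ such that $$\Pr\left[\max\{d_H(X,Y),d_H(X',Y)\}\le\frac d2-\frac{3\rho d}{8}\right]\le(\mu_1 n)^{-(1+\alpha_1)}.$$
   Context: $\mathrm{BSC}_p(x)$ denotes the output of the binary symmetric channel on input $x$: each bit of $x$ is flipped independently with probability $p$. $d_H$ denotes Hamming distance. *)

theory Defs
  imports "HOL-Probability.Probability"
begin

text \<open>Bit strings in {0,1}^d are modelled as functions nat => bool that are False outside {..<d}.\<close>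

definition uniform_bits :: "nat \<Rightarrow> (nat \<Rightarrow> bool) pmf" where
  "uniform_bits d = Pi_pmf {..<d} False (\<lambda>_. bernoulli_pmf (1/2))"

definition bsc :: "nat \<Rightarrow> real \<Rightarrow> (nat \<Rightarrow> bool) \<Rightarrow> (nat \<Rightarrow> bool) pmf" where
  "bsc d p x = map_pmf (\<lambda>e i. x i \<noteq> e i) (Pi_pmf {..<d} False (\<lambda>_. bernoulli_pmf p))"

definition hamming :: "nat \<Rightarrow> (nat \<Rightarrow> bool) \<Rightarrow> (nat \<Rightarrow> bool) \<Rightarrow> nat" where
  "hamming d x y = card {i. i < d \<and> x i \<noteq> y i}"

end

theory Submission imports Defs "HOL-Real_Asymp.Real_Asymp" begin

definition cc :: "bool \<Rightarrow> bool \<Rightarrow> bool \<Rightarrow> real" where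
  "cc x y x' = (if x = y then 1 else -1) + (if x' = y then 1 else -1)"

lemma ennreal_lin:
  "0\<le>a \<Longrightarrow> 0\<le>b \<Longrightarrow> 0\<le>c \<Longrightarrow> 0\<le>e \<Longrightarrow> ennreal a * ennreal b + ennreal c * ennreal e = ennreal (a*b + c*e)"
  by (simp add: ennreal_mult ennreal_plus)

lemma inner_e:
  assumes "0 \<le> \<rho>" "\<rho> \<le> 1"
  shows "(\<integral>\<^sup>+e. ennreal (exp (l * cc x y (x \<noteq> e))) \<partial>bernoulli_pmf ((1 - \<rho>)/2))
     = ennreal (exp (l * cc x y (\<not> x)) * ((1-\<rho>)/2) + exp (l * cc x y x) * ((1+\<rho>)/2))"
proof -
  have "(\<integral>\<^sup>+e. ennreal (exp (l * cc x y (x \<noteq> e))) \<partial>bernoulli_pmf ((1 - \<rho>)/2))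
     = ennreal (exp (l * cc x y (\<not> x))) * ennreal ((1-\<rho>)/2) + ennreal (exp (l * cc x y x)) * ennreal (1 - (1-\<rho>)/2)"
    using assms by simp
  also have "\<dots> = ennreal (exp (l * cc x y (\<not> x)) * ((1-\<rho>)/2) + exp (l * cc x y x) * (1 - (1-\<rho>)/2))"
    using assms by (intro ennreal_lin) auto
  finally show ?thesis by (simp add: field_simps)
qed

lemma inner_y:
  assumes "0 \<le> \<rho>" "\<rho> \<le> 1"
  shows "(\<integral>\<^sup>+y. ennreal (exp (l * cc x y (\<not> x)) * ((1-\<rho>)/2) + exp (l * cc x y x) * ((1+\<rho>)/2)) \<partial>bernoulli_pmf (1/2))
     = ennreal ((1+\<rho>)/4*(exp(2*l)+exp(-2*l)) + (1-\<rho>)/2)"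
proof -
  let ?g = "\<lambda>y. exp (l * cc x y (\<not> x)) * ((1-\<rho>)/2) + exp (l * cc x y x) * ((1+\<rho>)/2)"
  have "(\<integral>\<^sup>+y. ennreal (?g y) \<partial>bernoulli_pmf (1/2)) = ennreal (?g True) * ennreal (1/2) + ennreal (?g False) * ennreal (1 - 1/2)"
    by simp
  also have "\<dots> = ennreal (?g True * (1/2) + ?g False * (1 - 1/2))"
    using assms by (intro ennreal_lin) auto
  also have "?g True * (1/2) + ?g False * (1 - 1/2) = (1+\<rho>)/4*(exp(2*l)+exp(-2*l)) + (1-\<rho>)/2"
    by (cases x) (simp_all add: cc_def algebra_simps add_divide_distrib diff_divide_distrib)
  finally show ?thesis .
qed

definition PP :: "nat \<Rightarrow> real \<Rightarrow> ((nat \<Rightarrow> bool) \<times> (nat \<Rightarrow> bool) \<times> (nat \<Rightarrow> bool)) pmf" where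
  "PP d \<rho> = do { X \<leftarrow> uniform_bits d; Y \<leftarrow> uniform_bits d; X' \<leftarrow> bsc d ((1 - \<rho>) / 2) X;
             return_pmf (X, Y, X') }"

lemma mgf:
  assumes "0 \<le> \<rho>" "\<rho> \<le> 1"
  shows "(\<integral>\<^sup>+z. (\<Prod>i<d. ennreal (exp (l * cc (fst z i) (fst (snd z) i) (snd (snd z) i)))) \<partial>PP d \<rho>)
       = ennreal (((1+\<rho>)/4*(exp(2*l)+exp(-2*l)) + (1-\<rho>)/2) ^ d)"
proof -
  define M where "M = (1+\<rho>)/4*(exp(2*l)+exp(-2*l)) + (1-\<rho>)/2"
  define g where "g = (\<lambda>x y. exp (l * cc x y (\<not> x)) * ((1-\<rho>)/2) + exp (l * cc x y x) * ((1+\<rho>)/2))"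
  have M0: "0 \<le> M" using assms unfolding M_def by (intro add_nonneg_nonneg mult_nonneg_nonneg) auto
  have g0: "0 \<le> g x y" for x y using assms unfolding g_def by (intro add_nonneg_nonneg mult_nonneg_nonneg) auto
  have E: "(\<integral>\<^sup>+E. (\<Prod>i<d. ennreal (exp (l * cc (X i) (Y i) (X i \<noteq> E i)))) \<partial>Pi_pmf {..<d} False (\<lambda>_. bernoulli_pmf ((1 - \<rho>)/2)))
      = (\<Prod>i<d. ennreal (g (X i) (Y i)))" for X Y
  proof -
    have P: "(\<Prod>i<d. \<integral>\<^sup>+e. ennreal (exp (l * cc (X i) (Y i) (X i \<noteq> e))) \<partial>bernoulli_pmf ((1 - \<rho>)/2)) = (\<Prod>i<d. ennreal (g (X i) (Y i)))"
      unfolding g_def by (intro prod.cong refl inner_e[OF assms])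
    show ?thesis
      by (rule trans[OF nn_integral_prod_Pi_pmf[OF finite_lessThan, where f = "\<lambda>i e. ennreal (exp (l * cc (X i) (Y i) (X i \<noteq> e)))"] P])
  qed
  have Yi: "(\<integral>\<^sup>+Y. (\<Prod>i<d. ennreal (g (X i) (Y i))) \<partial>Pi_pmf {..<d} False (\<lambda>_. bernoulli_pmf (1/2)))
      = (\<Prod>i<d. ennreal M)" for X
  proof -
    have P: "(\<Prod>i<d. \<integral>\<^sup>+y. ennreal (g (X i) y) \<partial>bernoulli_pmf (1/2)) = (\<Prod>i<d. ennreal M)"
      unfolding g_def M_def by (intro prod.cong refl inner_y[OF assms])
    show ?thesis
      by (rule trans[OF nn_integral_prod_Pi_pmf[OF finite_lessThan, where f = "\<lambda>i y. ennreal (g (X i) y)"] P])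
  qed
  have "(\<integral>\<^sup>+z. (\<Prod>i<d. ennreal (exp (l * cc (fst z i) (fst (snd z) i) (snd (snd z) i)))) \<partial>PP d \<rho>)
      = (\<integral>\<^sup>+X. \<integral>\<^sup>+Y. \<integral>\<^sup>+E. (\<Prod>i<d. ennreal (exp (l * cc (X i) (Y i) (X i \<noteq> E i))))
           \<partial>Pi_pmf {..<d} False (\<lambda>_. bernoulli_pmf ((1 - \<rho>)/2))
           \<partial>Pi_pmf {..<d} False (\<lambda>_. bernoulli_pmf (1/2)) \<partial>Pi_pmf {..<d} False (\<lambda>_. bernoulli_pmf (1/2)))"
    unfolding PP_def uniform_bits_def bsc_def by simp
  also have "\<dots> = (\<integral>\<^sup>+X. (\<Prod>i<d. ennreal M) \<partial>Pi_pmf {..<d} False (\<lambda>_. bernoulli_pmf (1/2)))"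
    by (simp only: E Yi)
  also have "\<dots> = ennreal (M ^ d)"
    using M0 by (simp add: prod_ennreal ennreal_power)
  finally show ?thesis unfolding M_def .
qed

lemma sum_sign: "(\<Sum>i<d. (if x i = y i then 1 else -1 :: real)) = real d - 2 * real (hamming d x y)"
proof -
  have "(\<Sum>i<d. (if x i = y i then 1 else -1 :: real)) = (\<Sum>i<d. 1 - 2 * (if x i \<noteq> y i then 1 else 0))"
    by (intro sum.cong) auto
  also have "\<dots> = real d - 2 * (\<Sum>i<d. (if x i \<noteq> y i then 1 else 0))"
    by (simp add: sum_subtractf sum_distrib_left)
  also have "(\<Sum>i<d. (if x i \<noteq> y i then 1 else 0 :: real)) = real (card {i\<in>{..<d}. x i \<noteq> y i})"
    by (simp add: sum.If_cases) (intro arg_cong[where f=card]; auto)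
  also have "{i\<in>{..<d}. x i \<noteq> y i} = {i. i < d \<and> x i \<noteq> y i}" by auto
  finally show ?thesis by (simp add: hamming_def)
qed

lemma sum_cc: "(\<Sum>i<d. cc (x i) (y i) (x' i)) = 2 * real d - 2 * real (hamming d x y) - 2 * real (hamming d x' y)"
  unfolding cc_def by (simp add: sum.distrib sum_sign)

lemma markov:
  assumes "0 \<le> \<rho>" "\<rho> \<le> 1" "0 \<le> l"
  shows "measure_pmf.prob (PP d \<rho>) {z. t \<le> (\<Sum>i<d. cc (fst z i) (fst (snd z) i) (snd (snd z) i))}
     \<le> exp (- l * t) * ((1+\<rho>)/4*(exp(2*l)+exp(-2*l)) + (1-\<rho>)/2) ^ d"
proof -
  define M where "M = (1+\<rho>)/4*(exp(2*l)+exp(-2*l)) + (1-\<rho>)/2"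
  have M0: "0 \<le> M" using assms unfolding M_def by (intro add_nonneg_nonneg mult_nonneg_nonneg) auto
  define S where "S = (\<lambda>z. (\<Sum>i<d. cc (fst z i) (fst (snd z) i) (snd (snd z) i)))"
  define A where "A = {z. t \<le> S z}"
  have pt: "indicator A z \<le> ennreal (exp (- l * t)) * (\<Prod>i<d. ennreal (exp (l * cc (fst z i) (fst (snd z) i) (snd (snd z) i))))" for z
  proof -
    have "(\<Prod>i<d. ennreal (exp (l * cc (fst z i) (fst (snd z) i) (snd (snd z) i)))) = ennreal (exp (l * S z))"
      by (simp add: prod_ennreal S_def sum_distrib_left exp_sum)
    moreover have "indicator A z \<le> ennreal (exp (- l * t) * exp (l * S z))"
    proof (cases "z \<in> A")
      case True
      hence "l * t \<le> l * S z" using assms unfolding A_def by (auto intro: mult_left_mono)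
      hence "1 \<le> exp (- l * t) * exp (l * S z)" by (simp add: exp_add[symmetric])
      thus ?thesis using True by simp
    qed auto
    ultimately show ?thesis by (simp add: ennreal_mult)
  qed
  have "emeasure (PP d \<rho>) A = (\<integral>\<^sup>+z. indicator A z \<partial>PP d \<rho>)" by simp
  also have "\<dots> \<le> (\<integral>\<^sup>+z. ennreal (exp (- l * t)) * (\<Prod>i<d. ennreal (exp (l * cc (fst z i) (fst (snd z) i) (snd (snd z) i)))) \<partial>PP d \<rho>)"
    by (intro nn_integral_mono pt)
  also have "\<dots> = ennreal (exp (- l * t)) * ennreal (M ^ d)"
    by (subst nn_integral_cmult) (simp_all add: mgf[OF assms(1,2)] M_def)
  also have "\<dots> = ennreal (exp (- l * t) * M ^ d)" by (rule ennreal_mult[symmetric]) (auto simp: M0)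
  finally have "emeasure (PP d \<rho>) A \<le> ennreal (exp (- l * t) * M ^ d)" .
  hence "measure_pmf.prob (PP d \<rho>) A \<le> exp (- l * t) * M ^ d"
    using M0 by (simp add: measure_pmf.emeasure_eq_measure)
  thus ?thesis unfolding A_def S_def M_def .
qed

lemma event_bound:
  assumes "0 \<le> \<rho>" "\<rho> \<le> 1" "0 \<le> l"
  shows "measure_pmf.prob
       (do { X \<leftarrow> uniform_bits d; Y \<leftarrow> uniform_bits d; X' \<leftarrow> bsc d ((1 - \<rho>) / 2) X;
             return_pmf (X, Y, X') })
       {(X, Y, X'). real (max (hamming d X Y) (hamming d X' Y)) \<le> real d / 2 - 3 * \<rho> * real d / 8}
     \<le> exp (- l * (3 * \<rho> * real d / 2)) * ((1+\<rho>)/4*(exp(2*l)+exp(-2*l)) + (1-\<rho>)/2) ^ d"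
proof -
  have "measure_pmf.prob (PP d \<rho>)
       {(X, Y, X'). real (max (hamming d X Y) (hamming d X' Y)) \<le> real d / 2 - 3 * \<rho> * real d / 8}
      \<le> measure_pmf.prob (PP d \<rho>) {z. 3 * \<rho> * real d / 2 \<le> (\<Sum>i<d. cc (fst z i) (fst (snd z) i) (snd (snd z) i))}"
    by (intro measure_pmf.finite_measure_mono) (auto simp: sum_cc)
  also have "\<dots> \<le> exp (- l * (3 * \<rho> * real d / 2)) * ((1+\<rho>)/4*(exp(2*l)+exp(-2*l)) + (1-\<rho>)/2) ^ d" by (rule markov[OF assms])
  finally show ?thesis unfolding PP_def .
qed

lemma exp_pm_bound:
  fixes y :: real assumes "0 \<le> y" "y \<le> 1/2"
  shows "exp y + exp (-y) \<le> 2 + y^2 + y^4/6"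
proof -
  obtain t1 where t1: "\<bar>t1\<bar> \<le> \<bar>y\<bar>" "exp y = (\<Sum>m<4. (y ^ m) / fact m) + (exp t1 / fact 4) * y ^ 4"
    using Maclaurin_exp_le[of y 4] by blast
  obtain t2 where t2: "\<bar>t2\<bar> \<le> \<bar>-y\<bar>" "exp (-y) = (\<Sum>m<4. ((-y) ^ m) / fact m) + (exp t2 / fact 4) * (-y) ^ 4"
    using Maclaurin_exp_le[of "-y" 4] by blast
  have e1: "exp t1 \<le> 2" using t1(1) assms exp_bound_half[of t1] by simp
  have e2: "exp t2 \<le> 2" using t2(1) assms exp_bound_half[of t2] by simp
  have f4: "fact 4 = (24::real)" by (simp add: fact_numeral)
  have "exp y + exp (-y) = 2 + y^2 + (exp t1 + exp t2) / 24 * y^4"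
    using t1(2) t2(2) by (simp add: f4 numeral_eq_Suc fact_numeral algebra_simps power_numeral_reduce) (simp add: field_simps)
  also have "\<dots> \<le> 2 + y^2 + 4 / 24 * y^4"
    using e1 e2 by (intro add_left_mono mult_right_mono divide_right_mono) auto
  finally show ?thesis by simp
qed

lemma analytic:
  fixes \<rho> :: real and d :: nat
  assumes "0 \<le> \<rho>" "\<rho> \<le> 1/32"
  shows "exp (- (3*\<rho>/4) * (3 * \<rho> * real d / 2)) * ((1+\<rho>)/4*(exp(2*(3*\<rho>/4))+exp(-2*(3*\<rho>/4))) + (1-\<rho>)/2) ^ d
     \<le> exp (- (27/50) * (\<rho>^2 * real d))"
proof -
  define y where "y = 3*\<rho>/2"
  define M where "M = (1+\<rho>)/4*(exp y+exp(-y)) + (1-\<rho>)/2"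
  define B where "B = (1+\<rho>)/4 * (y^2 + y^4/6)"
  have y0: "0 \<le> y" "y \<le> 1/2" using assms unfolding y_def by auto
  have M0: "0 \<le> M" using assms unfolding M_def by (intro add_nonneg_nonneg mult_nonneg_nonneg) auto
  have "M \<le> (1+\<rho>)/4*(2 + y^2 + y^4/6) + (1-\<rho>)/2"
    unfolding M_def using assms exp_pm_bound[OF y0] by (intro add_right_mono mult_left_mono) auto
  also have "\<dots> = 1 + B" unfolding B_def by (simp add: field_simps)
  also have "\<dots> \<le> exp B" by (rule exp_ge_add_one_self)
  finally have "M \<le> exp B" .
  hence "M ^ d \<le> exp B ^ d" using M0 by (intro power_mono) auto
  also have "\<dots> = exp (real d * B)" by (simp add: exp_of_nat_mult)
  finally have Md: "M ^ d \<le> exp (real d * B)" .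
  have key: "(1+\<rho>)*(9/16 + 27*\<rho>^2/128) \<le> 9/8 - 27/50"
  proof -
    have "\<rho>^2 \<le> (1/32)^2" using assms by (intro power_mono) auto
    hence "(1+\<rho>)*(9/16 + 27*\<rho>^2/128) \<le> (1+1/32)*(9/16 + 27*(1/32)^2/128)"
      using assms by (intro mult_mono) auto
    moreover have "(1+1/32)*(9/16 + 27*(1/32)^2/128) \<le> (9/8 - 27/50 :: real)" by (simp add: power2_eq_square)
    ultimately show ?thesis by linarith
  qed
  have B_eq: "B = \<rho>^2 * ((1+\<rho>)*(9/16 + 27*\<rho>^2/128))"
    unfolding B_def y_def by (simp add: field_simps power_numeral_reduce)
  have "- (3*\<rho>/4) * (3 * \<rho> * real d / 2) + real d * B = (\<rho>^2 * real d) * (- 9/8 + (1+\<rho>)*(9/16 + 27*\<rho>^2/128))"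
    unfolding B_eq by (simp add: field_simps power2_eq_square)
  also have "\<dots> \<le> (\<rho>^2 * real d) * (- 27/50)"
    using key by (intro mult_left_mono) auto
  finally have ex: "- (3*\<rho>/4) * (3 * \<rho> * real d / 2) + real d * B \<le> - (27/50) * (\<rho>^2 * real d)" by simp
  have "exp (- (3*\<rho>/4) * (3 * \<rho> * real d / 2)) * M ^ d \<le> exp (- (3*\<rho>/4) * (3 * \<rho> * real d / 2)) * exp (real d * B)"
    using Md by (intro mult_left_mono) auto
  also have "\<dots> = exp (- (3*\<rho>/4) * (3 * \<rho> * real d / 2) + real d * B)" by (rule exp_add[symmetric])
  also have "\<dots> \<le> exp (- (27/50) * (\<rho>^2 * real d))" using ex by simp
  finally show ?thesis unfolding M_def y_def by (simp add: mult.commute)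
qed

lemma ev1: "eventually (\<lambda>n::nat. 27 * ln (ln (real n)) \<le> ln (real n)) sequentially"
  by real_asymp
lemma ev2: "eventually (\<lambda>n::nat. ln (real n) / real n \<le> 1/4096) sequentially"
  by real_asymp
lemma ev3: "filterlim (\<lambda>n::nat. ln (real n)) at_top sequentially"
  by real_asymp
lemma ev4: "eventually (\<lambda>n::nat. 3 \<le> real n) sequentially"
  by real_asymp
lemma ev5: "eventually (\<lambda>n::nat. c \<le> real n) sequentially"
  using filterlim_real_sequentially filterlim_at_top by blast
lemma ev6: "eventually (\<lambda>n::nat. c \<le> ln (real n)) sequentially"
  using ev3 unfolding filterlim_at_top by blast

theorem lemma4p3:
  fixes a \<mu>1 :: real
  assumes "a > 1" and "0 < \<mu>1" and "\<mu>1 \<le> 1"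
  shows "\<exists>\<alpha>1>0. \<exists>N::nat. \<forall>n\<ge>N. \<forall>d\<ge>n.
    (let \<rho> = sqrt ((2 * ln (a * \<mu>1 * real n) - ln (ln (real n))) / real d) in
     measure_pmf.prob
       (do { X \<leftarrow> uniform_bits d; Y \<leftarrow> uniform_bits d; X' \<leftarrow> bsc d ((1 - \<rho>) / 2) X;
             return_pmf (X, Y, X') })
       {(X, Y, X'). real (max (hamming d X Y) (hamming d X' Y)) \<le> real d / 2 - 3 * \<rho> * real d / 8}
     \<le> (\<mu>1 * real n) powr (-(1 + \<alpha>1)))"
proof -
  have "eventually (\<lambda>n::nat. 27 * ln (ln (real n)) \<le> ln (real n) \<and> ln (real n) / real n \<le> 1/4096
     \<and> 3 \<le> real n \<and> 4096 * ln a \<le> real n \<and> - 2 * ln \<mu>1 \<le> ln (real n)) sequentially"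
    by (intro eventually_conj ev1 ev2 ev4 ev5 ev6)
  then obtain N where N: "\<And>n. n \<ge> N \<Longrightarrow> 27 * ln (ln (real n)) \<le> ln (real n) \<and> ln (real n) / real n \<le> 1/4096
     \<and> 3 \<le> real n \<and> 4096 * ln a \<le> real n \<and> - 2 * ln \<mu>1 \<le> ln (real n)"
    unfolding eventually_sequentially by blast
  show ?thesis
  proof (intro exI[of _ "1/25"] conjI exI[of _ N] allI impI)
    fix n d :: nat assume nN: "N \<le> n" and dn: "n \<le> d"
    note Nn = N[OF nN]
    define q where "q = 2 * ln (a * \<mu>1 * real n) - ln (ln (real n))"
    define \<rho> where "\<rho> = sqrt (q / real d)"
    have n3: "3 \<le> real n" using Nn by auto
    have dpos: "0 < real d" using n3 dn by simp
    have npos: "0 < real n" using n3 by simp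
    have ln1: "1 \<le> ln (real n)"
    proof -
      have "exp 1 \<le> real n" using exp_le n3 by linarith
      thus ?thesis using ln_ge_iff npos by blast
    qed
    have lln: "0 \<le> ln (ln (real n))" using ln1 by simp
    have lmu: "ln (\<mu>1 * real n) = ln \<mu>1 + ln (real n)" using assms npos by (simp add: ln_mult)
    have lamu: "ln (a * \<mu>1 * real n) = ln a + ln (\<mu>1 * real n)" using assms npos by (simp add: ln_mult)
    have lan: "ln (a * real n) = ln a + ln (real n)" using assms npos by (simp add: ln_mult)
    have la0: "0 < ln a" using assms by simp
    have c2: "27 * ln (ln (real n)) \<le> 2 * ln (\<mu>1 * real n)" using Nn lmu by linarith
    have q0: "0 \<le> q" unfolding q_def using c2 lamu la0 lln by linarith
    have lmu0: "0 \<le> ln (\<mu>1 * real n)" using c2 lln by linarith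
    have "q \<le> 2 * ln (a * real n)"
    proof -
      have "ln \<mu>1 \<le> 0" using assms by simp
      thus ?thesis unfolding q_def using lamu lan lmu lln by linarith
    qed
    moreover have "q / real d \<le> q / real n"
      using dn q0 npos by (intro divide_left_mono) auto
    ultimately have "q / real d \<le> 2 * ln (a * real n) / real n"
      using npos by (meson divide_right_mono less_imp_le order.trans)
    also have "\<dots> = 2 * ln a / real n + 2 * (ln (real n) / real n)" using lan by (simp add: add_divide_distrib)
    also have "\<dots> \<le> 2 * (1/4096) + 2 * (1/4096)"
    proof -
      have "ln a / real n \<le> 1/4096" using Nn npos by (simp add: field_simps)
      moreover have "ln (real n) / real n \<le> 1/4096" using Nn by blast
      ultimately show ?thesis by linarith
    qed
    finally have qd: "q / real d \<le> (1/32)^2" by (simp add: power2_eq_square)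
    have r0: "0 \<le> \<rho>" unfolding \<rho>_def using q0 dpos by simp
    have "\<rho> \<le> sqrt ((1/32)^2)" unfolding \<rho>_def using qd by (rule real_sqrt_le_mono)
    hence r1: "\<rho> \<le> 1/32" by simp
    have r2: "\<rho>^2 * real d = q" unfolding \<rho>_def using q0 dpos by simp
    have "measure_pmf.prob
       (do { X \<leftarrow> uniform_bits d; Y \<leftarrow> uniform_bits d; X' \<leftarrow> bsc d ((1 - \<rho>) / 2) X;
             return_pmf (X, Y, X') })
       {(X, Y, X'). real (max (hamming d X Y) (hamming d X' Y)) \<le> real d / 2 - 3 * \<rho> * real d / 8}
      \<le> exp (- (3*\<rho>/4) * (3 * \<rho> * real d / 2)) * ((1+\<rho>)/4*(exp(2*(3*\<rho>/4))+exp(-2*(3*\<rho>/4))) + (1-\<rho>)/2) ^ d"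
      by (rule event_bound) (use r0 r1 in auto)
    also have "\<dots> \<le> exp (- (27/50) * (\<rho>^2 * real d))" by (rule analytic) (use r0 r1 in auto)
    also have "\<dots> \<le> exp (- (1 + 1/25) * ln (\<mu>1 * real n))"
      unfolding r2 q_def using lamu la0 c2 lmu0 by simp
    also have "\<dots> = (\<mu>1 * real n) powr (- (1 + 1/25))"
      using assms npos by (simp add: powr_def mult.commute)
    finally show "let \<rho> = sqrt ((2 * ln (a * \<mu>1 * real n) - ln (ln (real n))) / real d) in
     measure_pmf.prob
       (do { X \<leftarrow> uniform_bits d; Y \<leftarrow> uniform_bits d; X' \<leftarrow> bsc d ((1 - \<rho>) / 2) X;
             return_pmf (X, Y, X') })
       {(X, Y, X'). real (max (hamming d X Y) (hamming d X' Y)) \<le> real d / 2 - 3 * \<rho> * real d / 8}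
     \<le> (\<mu>1 * real n) powr (-(1 + 1/25))"
      unfolding Let_def \<rho>_def q_def .
  qed simp
qed
end
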